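(* Let $L\in\mathbb{N}_{>0}$ and $N_{L+1}\in\mathbb{N}_{>0}$. The set of all sampled networks $\Phi\colon\mathcal{X}\to\mathbb{R}^{N_{L+1}}$ with $L$ hidden layers (of arbitrary widths $N_1,\dots,N_L$) and ReLU activation is dense in $C(\mathcal{X},\mathbb{R}^{N_{L+1}})$ with respect to the uniform norm on $\mathcal{X}$.
   Context: Input space: Fix $D\ge 1$ and use the Euclidean norm $\|\cdot\|$ and inner product $\langle\cdot,\cdot\rangle$ on $\mathbb{R}^D$. For $A\subseteq\mathbb{R}^D$ let $d(z,A)=\inf_{a\in A}\|z-a\|$, let the medial axis be $\mathrm{Med}(A)=\{z\in\mathbb{R}^D:\exists p\neq q\in A,\ \|p-z\|=\|q-z\|=d(z,A)\}$, and let the reach be $\tau_A=\inf_{a\in A}d(a,\mathrm{Med}(A))$. Let $\mathcal{X}'\subset\mathbb{R}^D$ be a nonempty compact set with reach $\tau_{\mathcal{X}'}>0$, fix $0<\epsilon_I<\min\{\tau_{\mathcal{X}'},1\}$, and set $\mathcal{X}=\{x\in\mathbb{R}^D: d(x,\mathcal{X}')\le\epsilon_I\}$. Networks: with $\phi(t)=\max\{t,0\}$, a network with $L$ hidden layers of widths $N_1,\dots,N_L$ ($N_0=D$) and output dimension $N_{L+1}$ has parameters $W_l\in\mathbb{R}^{N_l\times N_{l-1}}$, $b_l\in\mathbb{R}^{N_l}$, and computes $\Phi^{(0)}(x)=x$, $\Phi^{(l)}(x)=\phi(W_l\Phi^{(l-1)}(x)-b_l)$ ($\phi$ applied entrywise)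 for $l=1,\dots,L$, and $\Phi(x)=W_{L+1}\Phi^{(L)}(x)-b_{L+1}$. Write $w_{l,i}$ for the $i$-th row of $W_l$ and $b_{l,i}$ for the $i$-th entry of $b_l$. Sampled network (ReLU): $\Phi$ is a sampled network if for every $l=1,\dots,L$ and $i=1,\dots,N_l$ there are points $x^{(1)}_{0,i},x^{(2)}_{0,i}\in\mathcal{X}$ such that, with $x^{(j)}_{l-1,i}=\Phi^{(l-1)}(x^{(j)}_{0,i})$, we have $x^{(1)}_{l-1,i}\neq x^{(2)}_{l-1,i}$ and $w_{l,i}=\frac{x^{(2)}_{l-1,i}-x^{(1)}_{l-1,i}}{\|x^{(2)}_{l-1,i}-x^{(1)}_{l-1,i}\|^2}$, $b_{l,i}=\langle w_{l,i},x^{(1)}_{l-1,i}\rangle$. The output-layer parameters $W_{L+1},b_{L+1}$ are unrestricted (they are chosen to minimize a loss). *)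

theory Defs
  imports "HOL-Analysis.Analysis" "HOL-Library.Extended_Real"
begin

definition medial_axis :: "'a::euclidean_space set \<Rightarrow> 'a set" where
  "medial_axis A = {z. \<exists>p q. p \<in> A \<and> q \<in> A \<and> p \<noteq> q \<and>
      norm (p - z) = infdist z A \<and> norm (q - z) = infdist z A}"

text \<open>Reach, as an extended real (infinite when the medial axis is empty).\<close>
definition reach :: "'a::euclidean_space set \<Rightarrow> ereal" where
  "reach A = (INF a\<in>A. INF m\<in>medial_axis A. ereal (norm (a - m)))"

text \<open>Layer l (1 \<le> l) has width N l; its value at input x
  is the function i \<mapsto> \<Phi>^(l)(x)_i (only i < N l is meaningful).
  W1 i is the i-th row of the first weight matrix (a vector in the input space),
  W l i j is entry (i,j) of W_l for l \<ge> 2, b l i is the i-th bias of layer l.\<close>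
fun hid :: "(nat \<Rightarrow> nat) \<Rightarrow> (nat \<Rightarrow> 'a::euclidean_space) \<Rightarrow> (nat \<Rightarrow> nat \<Rightarrow> nat \<Rightarrow> real)
    \<Rightarrow> (nat \<Rightarrow> nat \<Rightarrow> real) \<Rightarrow> nat \<Rightarrow> 'a \<Rightarrow> nat \<Rightarrow> real" where
  "hid N W1 W b 0 x i = 0"
| "hid N W1 W b (Suc 0) x i = max (W1 i \<bullet> x - b 1 i) 0"
| "hid N W1 W b (Suc (Suc l)) x i =
     max ((\<Sum>j<N (Suc l). W (Suc (Suc l)) i j * hid N W1 W b (Suc l) x j) - b (Suc (Suc l)) i) 0"

definition sampled :: "'a::euclidean_space set \<Rightarrow> nat \<Rightarrow> (nat \<Rightarrow> nat) \<Rightarrow> (nat \<Rightarrow> 'a)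
    \<Rightarrow> (nat \<Rightarrow> nat \<Rightarrow> nat \<Rightarrow> real) \<Rightarrow> (nat \<Rightarrow> nat \<Rightarrow> real) \<Rightarrow> bool" where
  "sampled X L N W1 W b \<longleftrightarrow>
     (1 \<le> L \<longrightarrow> (\<forall>i<N 1. \<exists>x1\<in>X. \<exists>x2\<in>X. x1 \<noteq> x2 \<and>
         W1 i = (1 / (norm (x2 - x1))\<^sup>2) *\<^sub>R (x2 - x1) \<and> b 1 i = W1 i \<bullet> x1)) \<and>
     (\<forall>l\<in>{2..L}. \<forall>i<N l. \<exists>x1\<in>X. \<exists>x2\<in>X.
         (\<exists>j<N (l-1). hid N W1 W b (l-1) x1 j \<noteq> hid N W1 W b (l-1) x2 j) \<and>
         (\<forall>j<N (l-1). W l i j =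
            (hid N W1 W b (l-1) x2 j - hid N W1 W b (l-1) x1 j) /
            (\<Sum>k<N (l-1). (hid N W1 W b (l-1) x2 k - hid N W1 W b (l-1) x1 k)\<^sup>2)) \<and>
         b l i = (\<Sum>j<N (l-1). W l i j * hid N W1 W b (l-1) x1 j))"

definition net_out :: "nat \<Rightarrow> (nat \<Rightarrow> nat) \<Rightarrow> (nat \<Rightarrow> 'a::euclidean_space)
    \<Rightarrow> (nat \<Rightarrow> nat \<Rightarrow> nat \<Rightarrow> real) \<Rightarrow> (nat \<Rightarrow> nat \<Rightarrow> real)
    \<Rightarrow> ('m::finite \<Rightarrow> nat \<Rightarrow> real) \<Rightarrow> real ^ 'm \<Rightarrow> 'a \<Rightarrow> real ^ 'm" where
  "net_out L N W1 W b Wout bout x =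
     (\<chi> k. \<Sum>j<N L. Wout k j * hid N W1 W b L x j) - bout"

end

theory Submission
  imports Defs
begin


definition nf :: "'a::euclidean_space \<times> 'a \<Rightarrow> 'a \<Rightarrow> real" where
  "nf p x = max (((1 / (norm (snd p - fst p))\<^sup>2) *\<^sub>R (snd p - fst p)) \<bullet> x
                - ((1 / (norm (snd p - fst p))\<^sup>2) *\<^sub>R (snd p - fst p)) \<bullet> fst p) 0"

lemma nf_dir:
  fixes a x1 x :: "'a::euclidean_space"
  assumes "t > 0" "a \<noteq> 0"
  shows "nf (x1, x1 + t *\<^sub>R a) x = max (a \<bullet> (x - x1)) 0 / (t * (norm a)\<^sup>2)"
proof -
  have na: "norm a > 0" using assms by simp
  have "((1 / (norm (t *\<^sub>R a))\<^sup>2) *\<^sub>R (t *\<^sub>R a)) \<bullet> x - ((1 / (norm (t *\<^sub>R a))\<^sup>2) *\<^sub>R (t *\<^sub>R a)) \<bullet> x1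
        = (a \<bullet> (x - x1)) / (t * (norm a)\<^sup>2)"
    using assms na by (simp add: inner_diff_right power2_eq_square field_simps)
  moreover have "max (u / (t * (norm a)\<^sup>2)) 0 = max u 0 / (t * (norm a)\<^sup>2)" for u
    using assms na by (auto simp: max_def field_simps)
  ultimately show ?thesis by (simp add: nf_def)
qed

lemma nf_nonneg: "nf p x \<ge> 0" by (simp add: nf_def)

locale setting =
  fixes X' :: "'a::euclidean_space set" and e :: real and z :: 'a
  assumes cX': "compact X'" and zX': "z \<in> X'" and epos: "e > 0"
begin

definition XX :: "'a set" where "XX = {x. infdist x X' \<le> e}"

definition good :: "'a \<times> 'a \<Rightarrow> bool" where
  "good p \<longleftrightarrow> fst p \<in> XX \<and> snd p \<in> XX \<and> fst p \<noteq> snd p \<and> nf p z = 0"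

definition RepQ :: "('a \<times> 'a) list \<Rightarrow> ('a \<Rightarrow> real) \<Rightarrow> bool" where
  "RepQ Q h \<longleftrightarrow> (\<exists>c D. \<forall>x. h x = c + (\<Sum>j<length Q. D j * nf (Q!j) x))"

definition Rep :: "('a \<Rightarrow> real) \<Rightarrow> bool" where
  "Rep h \<longleftrightarrow> (\<exists>Q. (\<forall>q\<in>set Q. good q) \<and> RepQ Q h)"

lemma cball_XX: "q \<in> X' \<Longrightarrow> cball q e \<subseteq> XX"
  unfolding XX_def
  by (auto simp: dist_commute intro: order_trans[OF infdist_le])

lemma X'_XX: "X' \<subseteq> XX"
  using cball_XX epos by fastforce

lemma z_XX: "z \<in> XX" using X'_XX zX' by auto

lemma compact_XX: "compact XX"
  unfolding XX_def using compact_infdist_le[OF _ cX' epos] zX' by auto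

lemma RepQ_const: "RepQ Q (\<lambda>x. c)"
  unfolding RepQ_def by (rule exI[of _ c], rule exI[of _ "\<lambda>_. 0"]) simp

lemma RepQ_neuron: assumes "j < length Q" shows "RepQ Q (\<lambda>x. nf (Q!j) x)"
  unfolding RepQ_def
proof (rule exI[of _ 0], rule exI[of _ "\<lambda>i. if i = j then 1 else 0"], intro allI)
  fix x note j = assms
  have "(\<Sum>i<length Q. (if i = j then 1 else 0) * nf (Q!i) x) = (\<Sum>i<length Q. if i = j then nf (Q!i) x else 0)"
    by (rule sum.cong) auto
  then show "nf (Q ! j) x = 0 + (\<Sum>i<length Q. (if i = j then 1 else 0) * nf (Q!i) x)"
    using j by simp
qed

lemma RepQ_add: "RepQ Q f \<Longrightarrow> RepQ Q g \<Longrightarrow> RepQ Q (\<lambda>x. f x + g x)"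
  unfolding RepQ_def
proof (elim exE)
  fix c1 D1 c2 D2
  assume 1: "\<forall>x. f x = c1 + (\<Sum>j<length Q. D1 j * nf (Q ! j) x)"
     and 2: "\<forall>x. g x = c2 + (\<Sum>j<length Q. D2 j * nf (Q ! j) x)"
  show "\<exists>c D. \<forall>x. f x + g x = c + (\<Sum>j<length Q. D j * nf (Q ! j) x)"
    by (rule exI[of _ "c1 + c2"], rule exI[of _ "\<lambda>j. D1 j + D2 j"])
       (simp add: 1 2 distrib_right sum.distrib)
qed

lemma RepQ_scale: "RepQ Q f \<Longrightarrow> RepQ Q (\<lambda>x. r * f x)"
  unfolding RepQ_def
proof (elim exE)
  fix c1 D1
  assume 1: "\<forall>x. f x = c1 + (\<Sum>j<length Q. D1 j * nf (Q ! j) x)"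
  show "\<exists>c D. \<forall>x. r * f x = c + (\<Sum>j<length Q. D j * nf (Q ! j) x)"
    by (rule exI[of _ "r * c1"], rule exI[of _ "\<lambda>j. r * D1 j"])
       (simp add: 1 distrib_left sum_distrib_left mult.assoc)
qed

lemma RepQ_append1: "RepQ Q f \<Longrightarrow> RepQ (Q @ Q') f"
  unfolding RepQ_def
proof (elim exE)
  fix c1 D1
  assume 1: "\<forall>x. f x = c1 + (\<Sum>j<length Q. D1 j * nf (Q ! j) x)"
  show "\<exists>c D. \<forall>x. f x = c + (\<Sum>j<length (Q @ Q'). D j * nf ((Q @ Q') ! j) x)"
  proof (rule exI[of _ c1], rule exI[of _ "\<lambda>j. if j < length Q then D1 j else 0"], intro allI)
    fix x
    have "(\<Sum>j<length (Q @ Q'). (if j < length Q then D1 j else 0) * nf ((Q @ Q') ! j) x)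
        = (\<Sum>j\<in>{..<length Q}. (if j < length Q then D1 j else 0) * nf ((Q @ Q') ! j) x)"
      by (rule sum.mono_neutral_right) auto
    also have "\<dots> = (\<Sum>j<length Q. D1 j * nf (Q ! j) x)"
      by (rule sum.cong) (auto simp: nth_append)
    finally show "f x = c1 + (\<Sum>j<length (Q @ Q'). (if j < length Q then D1 j else 0) * nf ((Q @ Q') ! j) x)"
      using 1 by simp
  qed
qed

lemma RepQ_append2: "RepQ Q f \<Longrightarrow> RepQ (Q' @ Q) f"
  unfolding RepQ_def
proof (elim exE)
  fix c1 D1
  assume 1: "\<forall>x. f x = c1 + (\<Sum>j<length Q. D1 j * nf (Q ! j) x)"
  show "\<exists>c D. \<forall>x. f x = c + (\<Sum>j<length (Q' @ Q). D j * nf ((Q' @ Q) ! j) x)"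
  proof (rule exI[of _ c1], rule exI[of _ "\<lambda>j. if j < length Q' then 0 else D1 (j - length Q')"], intro allI)
    fix x
    let ?n = "length Q'"
    have "(\<Sum>j<length (Q' @ Q). (if j < ?n then 0 else D1 (j - ?n)) * nf ((Q' @ Q) ! j) x)
        = (\<Sum>j\<in>{?n..<?n + length Q}. (if j < ?n then 0 else D1 (j - ?n)) * nf ((Q' @ Q) ! j) x)"
      by (rule sum.mono_neutral_right) auto
    also have "\<dots> = (\<Sum>j<length Q. (if j + ?n < ?n then 0 else D1 (j + ?n - ?n)) * nf ((Q' @ Q) ! (j + ?n)) x)"
      by (rule sum.reindex_bij_witness[where i="\<lambda>j. j + ?n" and j="\<lambda>j. j - ?n"]) auto
    also have "\<dots> = (\<Sum>j<length Q. D1 j * nf (Q ! j) x)"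
      by (simp add: nth_append)
    finally show "f x = c1 + (\<Sum>j<length (Q' @ Q). (if j < ?n then 0 else D1 (j - ?n)) * nf ((Q' @ Q) ! j) x)"
      using 1 by simp
  qed
qed

lemma Rep_const: "Rep (\<lambda>x. c)"
  unfolding Rep_def by (rule exI[of _ "[]"]) (simp add: RepQ_const)

lemma Rep_add: assumes "Rep f" "Rep g" shows "Rep (\<lambda>x. f x + g x)"
proof -
  obtain Q1 where Q1: "\<forall>q\<in>set Q1. good q" "RepQ Q1 f" using assms(1) unfolding Rep_def by blast
  obtain Q2 where Q2: "\<forall>q\<in>set Q2. good q" "RepQ Q2 g" using assms(2) unfolding Rep_def by blast
  have "RepQ (Q1 @ Q2) (\<lambda>x. f x + g x)"
    by (rule RepQ_add[OF RepQ_append1[OF Q1(2)] RepQ_append2[OF Q2(2)]])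
  moreover have "\<forall>q\<in>set (Q1 @ Q2). good q" using Q1 Q2 by auto
  ultimately show ?thesis unfolding Rep_def by blast
qed

lemma Rep_scale: "Rep f \<Longrightarrow> Rep (\<lambda>x. r * f x)"
  unfolding Rep_def using RepQ_scale by blast

lemma Rep_good: "good q \<Longrightarrow> Rep (nf q)"
  unfolding Rep_def
  by (rule exI[of _ "[q]"]) (use RepQ_neuron[of 0 "[q]"] in auto)

lemma Rep_sum: "finite I \<Longrightarrow> (\<And>i. i \<in> I \<Longrightarrow> Rep (F i)) \<Longrightarrow> Rep (\<lambda>x. \<Sum>i\<in>I. F i x)"
proof (induction I rule: finite_induct)
  case empty then show ?case using Rep_const[of 0] by simp
next
  case (insert i I) then show ?case using Rep_add[of "F i" "\<lambda>x. \<Sum>i\<in>I. F i x"] by simp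
qed

lemma Rep_diff: "Rep f \<Longrightarrow> Rep g \<Longrightarrow> Rep (\<lambda>x. f x - g x)"
  using Rep_add[of f "\<lambda>x. (-1) * g x"] Rep_scale[of g "-1"] by simp

end


context setting begin

lemma dir_pts:
  assumes "q \<in> X'" "dist y q < e" "a \<noteq> 0"
  obtains t where "t > 0" "y + t *\<^sub>R a \<in> XX" "y - t *\<^sub>R a \<in> XX"
proof -
  define t where "t = (e - dist y q) / norm a"
  have t: "t > 0" using assms by (simp add: t_def)
  have nt: "norm (t *\<^sub>R a) = e - dist y q" using assms t by (simp add: t_def)
  have "dist (y + t *\<^sub>R a) q \<le> dist y q + norm (t *\<^sub>R a)"
    using dist_triangle[of "y + t *\<^sub>R a" q y] by (simp add: dist_norm)
  then have 1: "y + t *\<^sub>R a \<in> cball q e" using nt by (simp add: dist_commute)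
  have "dist (y - t *\<^sub>R a) q \<le> dist y q + norm (t *\<^sub>R a)"
    using dist_triangle[of "y - t *\<^sub>R a" q y] by (simp add: dist_norm)
  then have 2: "y - t *\<^sub>R a \<in> cball q e" using nt by (simp add: dist_commute)
  show ?thesis using that[OF t] 1 2 cball_XX[OF assms(1)] by blast
qed

lemma Rep_lin: "Rep (\<lambda>x. a \<bullet> (x - z))"
proof (cases "a = 0")
  case True then show ?thesis using Rep_const[of 0] by simp
next
  case False
  obtain t where t: "t > 0" "z + t *\<^sub>R a \<in> XX" "z - t *\<^sub>R a \<in> XX"
    using dir_pts[OF zX' _ False, of z] epos by auto
  have na: "norm a > 0" using False by simp
  have g1: "good (z, z + t *\<^sub>R a)"
    unfolding good_def using t False z_XX by (simp add: nf_dir)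
  have e2: "z - t *\<^sub>R a = z + t *\<^sub>R (-a)" by simp
  have g2: "good (z, z + t *\<^sub>R (-a))"
    unfolding good_def using t False z_XX e2 by (simp add: nf_dir del: scaleR_minus_right)
  have eq: "a \<bullet> (x - z) = (t * (norm a)\<^sup>2) * nf (z, z + t *\<^sub>R a) x - (t * (norm a)\<^sup>2) * nf (z, z + t *\<^sub>R (-a)) x" for x
  proof -
    have "a \<bullet> (x - z) = max (a \<bullet> (x - z)) 0 - max ((-a) \<bullet> (x - z)) 0" by (simp add: max_def)
    then show ?thesis using t na False by (simp add: nf_dir del: scaleR_minus_right)
  qed
  show ?thesis
    unfolding eq
    by (rule Rep_diff; rule Rep_scale; rule Rep_good) (use g1 g2 in auto)
qed

lemma Rep_relu:
  assumes "q \<in> X'" "dist y q < e"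
  shows "Rep (\<lambda>x. max (a \<bullet> (x - y)) 0)"
proof (cases "a = 0")
  case True then show ?thesis using Rep_const[of 0] by simp
next
  case False
  obtain t where t: "t > 0" "y + t *\<^sub>R a \<in> XX" "y - t *\<^sub>R a \<in> XX"
    using dir_pts[OF assms False] by auto
  have na: "norm a > 0" using False by simp
  have yX: "y \<in> XX" using cball_XX[OF assms(1)] assms(2) by (auto simp: dist_commute)
  show ?thesis
  proof (cases "a \<bullet> (z - y) \<le> 0")
    case True
    have g1: "good (y, y + t *\<^sub>R a)"
      unfolding good_def using t False yX True by (simp add: nf_dir max_def)
    have eq: "max (a \<bullet> (x - y)) 0 = (t * (norm a)\<^sup>2) * nf (y, y + t *\<^sub>R a) x" for x
      using t na False by (simp add: nf_dir)
    show ?thesis unfolding eq by (rule Rep_scale[OF Rep_good[OF g1]])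
  next
    case nc: False
    have e2: "y - t *\<^sub>R a = y + t *\<^sub>R (-a)" by simp
    have g2: "good (y, y + t *\<^sub>R (-a))"
      unfolding good_def using t False yX e2 nc by (simp add: nf_dir max_def del: scaleR_minus_right)
    have eq: "max (a \<bullet> (x - y)) 0 = ((t * (norm a)\<^sup>2) * nf (y, y + t *\<^sub>R (-a)) x + a \<bullet> (x - z)) + a \<bullet> (z - y)" for x
    proof -
      have 1: "max (a \<bullet> (x - y)) 0 = max ((-a) \<bullet> (x - y)) 0 + a \<bullet> (x - y)" by (simp add: max_def)
      have 2: "a \<bullet> (x - y) = a \<bullet> (x - z) + a \<bullet> (z - y)" by (simp add: inner_diff_right)
      have 3: "(t * (norm a)\<^sup>2) * nf (y, y + t *\<^sub>R (-a)) x = max ((-a) \<bullet> (x - y)) 0"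
      proof -
        have c: "t * (norm a)\<^sup>2 \<noteq> 0" using t na by simp
        have "nf (y, y + t *\<^sub>R (-a)) x = max ((-a) \<bullet> (x - y)) 0 / (t * (norm a)\<^sup>2)"
          using nf_dir[OF t(1), of "-a" y x] False by simp
        then show ?thesis using c by simp
      qed
      show ?thesis using 1 2 3 by linarith
    qed
    show ?thesis unfolding eq
      by (intro Rep_add Rep_scale Rep_good Rep_lin Rep_const g2)
  qed
qed

end


definition pl :: "real \<Rightarrow> (real \<times> real) list \<Rightarrow> real \<Rightarrow> real" where
  "pl C ps t = C + sum_list (map (\<lambda>(c,p). c * max (t - p) 0) ps)"

lemma pl_append: "pl C (ps @ [(s, m), (-s, b)]) t = pl C ps t + s * max (t - m) 0 - s * max (t - b) 0"
  by (simp add: pl_def)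

lemma interp:
  fixes g :: "real \<Rightarrow> real" and P :: "real set"
  assumes fin: "finite P" and ne: "P \<noteq> {}" and lip: "\<And>s t. \<bar>g s - g t\<bar> \<le> K * \<bar>s - t\<bar>"
  shows "\<exists>C ps. set (map snd ps) \<subseteq> P \<and> (\<forall>t. \<forall>q\<in>P. \<bar>pl C ps t - g t\<bar> \<le> 2*K*\<bar>t - q\<bar>)
           \<and> (\<forall>t \<ge> Max P. pl C ps t = g (Max P))"
  using fin ne
proof (induction P rule: finite_linorder_max_induct)
  case empty then show ?case by simp
next
  case (insert b A)
  have K: "K \<ge> 0" using lip[of 1 0] by simp
  show ?case
  proof (cases "A = {}")
    case True
    have "\<bar>pl (g b) [] t - g t\<bar> \<le> 2*K*\<bar>t - b\<bar>" for t
    proof -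
      have "\<bar>g b - g t\<bar> \<le> K * \<bar>b - t\<bar>" by (rule lip)
      then show ?thesis using K by (simp add: pl_def abs_minus_commute)
    qed
    then show ?thesis using True by (intro exI[of _ "g b"] exI[of _ "[]"]) (auto simp: pl_def)
  next
    case False
    obtain C ps where IH: "set (map snd ps) \<subseteq> A" "\<forall>t. \<forall>q\<in>A. \<bar>pl C ps t - g t\<bar> \<le> 2*K*\<bar>t - q\<bar>"
        "\<forall>t \<ge> Max A. pl C ps t = g (Max A)"
      using insert.IH[OF False] by blast
    define m where "m = Max A"
    have mA: "m \<in> A" using False insert.hyps(1) by (simp add: m_def)
    have mb: "m < b" using mA insert.hyps(2) by auto
    have qm: "q \<le> m" if "q \<in> A" for q using that insert.hyps(1) by (simp add: m_def)
    have Mx: "Max (insert b A) = b" using insert.hyps False by (auto intro!: Max_eqI)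
    define s where "s = (g b - g m) / (b - m)"
    have sbm: "s * (b - m) = g b - g m" using mb by (simp add: s_def)
    have sK: "\<bar>s\<bar> \<le> K"
    proof -
      have "\<bar>g b - g m\<bar> \<le> K * (b - m)" using lip[of b m] mb by simp
      then show ?thesis using mb by (simp add: s_def abs_divide divide_le_eq)
    qed
    define ps' where "ps' = ps @ [(s, m), (-s, b)]"
    have pl': "pl C ps' t = pl C ps t + s * max (t - m) 0 - s * max (t - b) 0" for t
      by (simp add: ps'_def pl_append)
    have bound: "\<bar>pl C ps' t - g t\<bar> \<le> 2*K*\<bar>t - q\<bar>" if q: "q \<in> insert b A" for t q
    proof (cases "t \<le> m")
      case True
      then have "pl C ps' t = pl C ps t" using mb by (simp add: pl')
      moreover have "\<bar>pl C ps t - g t\<bar> \<le> 2*K*\<bar>t - q\<bar>"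
      proof (cases "q = b")
        case True
        have "\<bar>pl C ps t - g t\<bar> \<le> 2*K*\<bar>t - m\<bar>" using IH(2) mA by blast
        also have "\<dots> \<le> 2*K*\<bar>t - q\<bar>" using K True \<open>t \<le> m\<close> mb by (intro mult_left_mono) auto
        finally show ?thesis .
      next
        case False then show ?thesis using IH(2) q by auto
      qed
      ultimately show ?thesis by simp
    next
      case tm: False
      have plm: "pl C ps t = g m" using IH(3) tm by (simp add: m_def)
      show ?thesis
      proof (cases "t \<le> b")
        case True
        have v: "pl C ps' t = g m + s * (t - m)" using tm True by (simp add: pl' plm)
        have E1: "\<bar>pl C ps' t - g t\<bar> \<le> 2*K*(t - m)"
        proof -
          have "\<bar>pl C ps' t - g t\<bar> \<le> \<bar>g m - g t\<bar> + \<bar>s\<bar> * (t - m)"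
          proof -
            have "\<bar>s * (t - m)\<bar> = \<bar>s\<bar> * (t - m)" using tm by (simp add: abs_mult)
            moreover have "g m + s * (t - m) - g t = (g m - g t) + s * (t - m)" by simp
            ultimately show ?thesis unfolding v using abs_triangle_ineq[of "g m - g t" "s * (t - m)"] by simp
          qed
          also have "\<dots> \<le> K * (t - m) + K * (t - m)"
            using lip[of m t] tm sK by (intro add_mono mult_right_mono) (auto simp: abs_minus_commute)
          finally show ?thesis by simp
        qed
        have v2: "pl C ps' t = g b + s * (t - b)" using v sbm by (simp add: algebra_simps)
        have E2: "\<bar>pl C ps' t - g t\<bar> \<le> 2*K*(b - t)"
        proof -
          have "\<bar>pl C ps' t - g t\<bar> \<le> \<bar>g b - g t\<bar> + \<bar>s\<bar> * (b - t)"
          proof -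
            have "\<bar>s * (t - b)\<bar> = \<bar>s\<bar> * (b - t)" using True by (simp add: abs_mult)
            moreover have "g b + s * (t - b) - g t = (g b - g t) + s * (t - b)" by simp
            ultimately show ?thesis unfolding v2 using abs_triangle_ineq[of "g b - g t" "s * (t - b)"] by simp
          qed
          also have "\<dots> \<le> K * (b - t) + K * (b - t)"
            using lip[of b t] True sK by (intro add_mono mult_right_mono) auto
          finally show ?thesis by simp
        qed
        show ?thesis
        proof (cases "q = b")
          case True then show ?thesis using E2 \<open>t \<le> b\<close> by simp
        next
          case False
          then have "q \<le> m" using q qm by auto
          then have "t - m \<le> \<bar>t - q\<bar>" by simp
          then have "2*K*(t - m) \<le> 2*K*\<bar>t - q\<bar>" using K by (intro mult_left_mono) auto
          then show ?thesis using E1 by simp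
        qed
      next
        case False
        have "pl C ps' t = g m + s * (t - m) - s * (t - b)" using tm False by (simp add: pl' plm)
        also have "\<dots> = g b" using sbm by (simp add: algebra_simps)
        finally have v: "pl C ps' t = g b" .
        have qb: "q \<le> b" using q qm[of q] mb by force
        have "\<bar>g b - g t\<bar> \<le> K * \<bar>b - t\<bar>" by (rule lip)
        also have "\<dots> \<le> K * \<bar>t - q\<bar>" using K False qb by (intro mult_left_mono) auto
        also have "\<dots> \<le> 2*K*\<bar>t - q\<bar>" using K by simp
        finally show ?thesis using v by simp
      qed
    qed
    have top: "pl C ps' t = g (Max (insert b A))" if "t \<ge> Max (insert b A)" for t
    proof -
      have tb: "t \<ge> b" using that Mx by simp
      then have "pl C ps t = g m" using IH(3) mb by (simp add: m_def)
      then have "pl C ps' t = g m + s * (t - m) - s * (t - b)" using tb mb by (simp add: pl')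
      also have "\<dots> = g b" using sbm by (simp add: algebra_simps)
      finally show ?thesis using Mx by simp
    qed
    have "set (map snd ps') \<subseteq> insert b A" using IH(1) mA by (auto simp: ps'_def)
    then show ?thesis using bound top by blast
  qed
qed


context setting begin

definition Yp :: "'a set" where "Yp = {y. \<exists>q\<in>X'. dist y q < e}"

lemma near_Yp:
  assumes "x \<in> XX" "r > 0"
  shows "\<exists>y\<in>Yp. dist x y < r"
proof -
  have cl: "closed X'" using cX' compact_imp_closed by blast
  obtain q where q: "q \<in> X'" "infdist x X' = dist x q"
    using infdist_attains_inf[OF cl, of x] zX' by blast
  have dq: "dist x q \<le> e" using assms q by (simp add: XX_def)
  show ?thesis
  proof (cases "dist x q < e")
    case True
    have "x \<in> Yp" using q True unfolding Yp_def by blast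
    then show ?thesis using assms by (intro bexI[of _ x]) auto
  next
    case False
    then have dqe: "dist x q = e" using dq by simp
    define \<eta> where "\<eta> = min (1/2) (r / (2*e))"
    have \<eta>: "\<eta> > 0" "\<eta> \<le> 1/2" "\<eta> * e \<le> r/2" using assms epos
      by (auto simp: \<eta>_def min_def field_simps)
    define y where "y = x + \<eta> *\<^sub>R (q - x)"
    have "y - q = (1 - \<eta>) *\<^sub>R (x - q)" by (simp add: y_def algebra_simps)
    then have "dist y q = (1 - \<eta>) * e" using \<eta> dqe by (simp add: dist_norm)
    also have "\<dots> < e" using \<eta> epos by simp
    finally have "y \<in> Yp" using q by (auto simp: Yp_def)
    moreover have "dist x y = \<eta> * e"
      using \<eta> dqe by (simp add: y_def dist_norm norm_minus_commute)
    ultimately show ?thesis using \<eta> assms by (intro bexI[of _ y]) auto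
  qed
qed

lemma Rep_relu_list:
  assumes "\<forall>cp\<in>set ps. \<exists>y\<in>Yp. snd cp = a \<bullet> y"
  shows "Rep (\<lambda>x. sum_list (map (\<lambda>(c,p). c * max (a \<bullet> x - p) 0) ps))"
  using assms
proof (induction ps)
  case Nil then show ?case using Rep_const[of 0] by simp
next
  case (Cons cp ps)
  obtain c p where cp: "cp = (c, p)" by force
  obtain y q where y: "q \<in> X'" "dist y q < e" "p = a \<bullet> y" using Cons.prems cp by (auto simp: Yp_def)
  have "Rep (\<lambda>x. max (a \<bullet> (x - y)) 0)" by (rule Rep_relu[OF y(1,2)])
  moreover have "(\<lambda>x. max (a \<bullet> (x - y)) 0) = (\<lambda>x. max (a \<bullet> x - p) 0)" using y(3) by (simp add: inner_diff_right)
  ultimately have "Rep (\<lambda>x. c * max (a \<bullet> x - p) 0)" using Rep_scale by metis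
  then show ?case using Rep_add[OF _ Cons.IH] Cons.prems cp by simp
qed

lemma ridge_approx:
  fixes g :: "real \<Rightarrow> real"
  assumes lip: "\<And>s t. \<bar>g s - g t\<bar> \<le> K * \<bar>s - t\<bar>" and a: "a \<noteq> 0" and \<epsilon>: "\<epsilon> > 0"
  shows "\<exists>h. Rep h \<and> (\<forall>x\<in>XX. \<bar>h x - g (a \<bullet> x)\<bar> \<le> \<epsilon>)"
proof -
  have K: "K \<ge> 0" using lip[of 1 0] by simp
  have na: "norm a > 0" using a by simp
  define r where "r = \<epsilon> / ((2*K+1) * norm a)"
  have r: "r > 0" using \<epsilon> K na by (simp add: r_def)
  have cov: "XX \<subseteq> (\<Union>y\<in>Yp. ball y r)"
    using near_Yp[OF _ r] by (force simp: dist_commute)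
  obtain Y where Y: "Y \<subseteq> Yp" "finite Y" "XX \<subseteq> (\<Union>y\<in>Y. ball y r)"
    using compactE_image[OF compact_XX _ cov] by blast
  have Yne: "Y \<noteq> {}" using Y(3) z_XX by blast
  define P where "P = (\<lambda>y. a \<bullet> y) ` Y"
  have P: "finite P" "P \<noteq> {}" using Y Yne by (auto simp: P_def)
  obtain C ps where ps: "set (map snd ps) \<subseteq> P" "\<forall>t. \<forall>q\<in>P. \<bar>pl C ps t - g t\<bar> \<le> 2*K*\<bar>t - q\<bar>"
    using interp[OF P lip] by blast
  define h where "h x = pl C ps (a \<bullet> x)" for x
  have "\<forall>cp\<in>set ps. \<exists>y\<in>Yp. snd cp = a \<bullet> y" using ps(1) Y(1) by (force simp: P_def)
  then have "Rep (\<lambda>x. sum_list (map (\<lambda>(c,p). c * max (a \<bullet> x - p) 0) ps))" by (rule Rep_relu_list)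
  then have "Rep (\<lambda>x. C + sum_list (map (\<lambda>(c,p). c * max (a \<bullet> x - p) 0) ps))"
    using Rep_add[OF Rep_const] by blast
  then have Rh: "Rep h" unfolding h_def pl_def by simp
  have "\<bar>h x - g (a \<bullet> x)\<bar> \<le> \<epsilon>" if x: "x \<in> XX" for x
  proof -
    obtain y where y: "y \<in> Y" "dist y x < r" using Y(3) x by auto
    have "\<bar>h x - g (a \<bullet> x)\<bar> \<le> 2*K*\<bar>a \<bullet> x - a \<bullet> y\<bar>" using ps(2) y(1) by (simp add: h_def P_def)
    also have "\<bar>a \<bullet> x - a \<bullet> y\<bar> \<le> norm a * dist x y"
      using Cauchy_Schwarz_ineq2[of a "x - y"] by (simp add: inner_diff_right dist_norm)
    also have "norm a * dist x y \<le> norm a * r" using y(2) na by (simp add: dist_commute)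
    also have "norm a * r = \<epsilon> / (2*K+1)" using na K by (simp add: r_def)
    finally have "\<bar>h x - g (a \<bullet> x)\<bar> \<le> 2*K*(\<epsilon> / (2*K+1))" using K by (simp add: mult_left_mono)
    also have "\<dots> \<le> \<epsilon>" using K \<epsilon> by (simp add: field_simps)
    finally show ?thesis .
  qed
  then show ?thesis using Rh by blast
qed

end


definition ES :: "(real \<times> 'a::euclidean_space) list \<Rightarrow> 'a \<Rightarrow> real" where
  "ES ps x = sum_list (map (\<lambda>(c,a). c * exp (a \<bullet> x)) ps)"

lemma ES_Nil[simp]: "ES [] x = 0" by (simp add: ES_def)
lemma ES_Cons[simp]: "ES ((c,a) # ps) x = c * exp (a \<bullet> x) + ES ps x" by (simp add: ES_def)
lemma ES_append: "ES (ps @ qs) x = ES ps x + ES qs x" by (simp add: ES_def)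

lemma ES_shift: "ES (map (\<lambda>(d,b). (c*d, a+b)) qs) x = c * exp (a \<bullet> x) * ES qs x"
  by (induction qs) (auto simp: inner_add_left exp_add algebra_simps)

lemma ES_mult: "ES ps x * ES qs x = ES (concat (map (\<lambda>(c,a). map (\<lambda>(d,b). (c*d, a+b)) qs) ps)) x"
  by (induction ps) (auto simp: ES_append ES_shift algebra_simps)

lemma ES_cont: "continuous_on S (ES ps)"
proof (induction ps)
  case Nil then show ?case by (simp add: ES_def)
next
  case (Cons p ps)
  obtain c a where p: "p = (c, a)" by force
  have "ES (p # ps) = (\<lambda>x. c * exp (a \<bullet> x) + ES ps x)" using p by (simp add: fun_eq_iff)
  then show ?case using Cons.IH by (auto intro!: continuous_intros)
qed

lemma exp_lip:
  fixes H :: real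
  shows "\<bar>exp (min s H) - exp (min t H)\<bar> \<le> exp H * \<bar>s - t\<bar>"
proof -
  have key: "exp v - exp u \<le> exp H * (v - u)" if "u \<le> v" "v \<le> H" for u v :: real
  proof -
    have "exp u = exp v * exp (u - v)" by (simp add: exp_diff)
    also have "\<dots> \<ge> exp v * (1 + (u - v))" by (intro mult_left_mono) auto
    finally have "exp v - exp u \<le> exp v * (v - u)" by (simp add: algebra_simps)
    also have "\<dots> \<le> exp H * (v - u)" using that by (intro mult_right_mono) auto
    finally show ?thesis .
  qed
  have m: "\<bar>min s H - min t H\<bar> \<le> \<bar>s - t\<bar>" by (simp add: min_def abs_if)
  show ?thesis
  proof (cases "min s H \<le> min t H")
    case True
    then have "\<bar>exp (min s H) - exp (min t H)\<bar> = exp (min t H) - exp (min s H)" by simp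
    also have "\<dots> \<le> exp H * (min t H - min s H)" using True by (intro key) auto
    also have "\<dots> \<le> exp H * \<bar>s - t\<bar>" using m True by (intro mult_left_mono) auto
    finally show ?thesis .
  next
    case False
    then have "min t H \<le> min s H" by linarith
    then have "exp (min t H) \<le> exp (min s H)" by (simp only: exp_le_cancel_iff)
    then have "\<bar>exp (min s H) - exp (min t H)\<bar> = exp (min s H) - exp (min t H)" by linarith
    also have "\<dots> \<le> exp H * (min s H - min t H)" using False by (intro key) auto
    also have "\<dots> \<le> exp H * \<bar>s - t\<bar>" using m False by (intro mult_left_mono) auto
    finally show ?thesis .
  qed
qed

context setting begin

lemma exp1_approx:
  assumes "\<epsilon> > 0"
  shows "\<exists>h. Rep h \<and> (\<forall>x\<in>XX. \<bar>h x - exp (a \<bullet> x)\<bar> < \<epsilon>)"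
proof (cases "a = 0")
  case True then show ?thesis using Rep_const[of 1] assms by (intro exI[of _ "\<lambda>x. 1"]) auto
next
  case False
  obtain B where B: "\<forall>x\<in>XX. norm x \<le> B"
    using compact_XX compact_imp_bounded bounded_iff by metis
  define H where "H = norm a * B"
  have aH: "a \<bullet> x \<le> H" if "x \<in> XX" for x
  proof -
    have "a \<bullet> x \<le> norm a * norm x" using Cauchy_Schwarz_ineq2[of a x] by simp
    also have "\<dots> \<le> norm a * B" using B that by (intro mult_left_mono) auto
    finally show ?thesis by (simp add: H_def)
  qed
  obtain h where h: "Rep h" "\<forall>x\<in>XX. \<bar>h x - exp (min (a \<bullet> x) H)\<bar> \<le> \<epsilon>/2"
    using ridge_approx[of "\<lambda>s. exp (min s H)" "exp H" a "\<epsilon>/2"] exp_lip False assms by auto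
  show ?thesis
  proof (intro exI[of _ h] conjI ballI)
    fix x assume "x \<in> XX"
    then show "\<bar>h x - exp (a \<bullet> x)\<bar> < \<epsilon>" using h(2) aH[of x] assms by (auto simp: min_def)
  qed (fact h(1))
qed

lemma ES_approx:
  assumes "\<epsilon> > 0"
  shows "\<exists>h. Rep h \<and> (\<forall>x\<in>XX. \<bar>h x - ES ps x\<bar> < \<epsilon>)"
  using assms
proof (induction ps arbitrary: \<epsilon>)
  case Nil then show ?case using Rep_const[of 0] by (intro exI[of _ "\<lambda>x. 0"]) auto
next
  case (Cons p ps)
  obtain c a where p: "p = (c, a)" by force
  define \<epsilon>1 where "\<epsilon>1 = \<epsilon> / (2 * (\<bar>c\<bar> + 1))"
  have e1: "\<epsilon>1 > 0" using Cons.prems by (simp add: \<epsilon>1_def)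
  obtain h1 where h1: "Rep h1" "\<forall>x\<in>XX. \<bar>h1 x - exp (a \<bullet> x)\<bar> < \<epsilon>1" using exp1_approx[OF e1] by blast
  obtain h2 where h2: "Rep h2" "\<forall>x\<in>XX. \<bar>h2 x - ES ps x\<bar> < \<epsilon>/2" using Cons.IH[of "\<epsilon>/2"] Cons.prems by auto
  have R: "Rep (\<lambda>x. c * h1 x + h2 x)" using Rep_add[OF Rep_scale[OF h1(1)] h2(1)] by simp
  have "\<bar>(c * h1 x + h2 x) - ES (p # ps) x\<bar> < \<epsilon>" if x: "x \<in> XX" for x
  proof -
    have "\<bar>(c * h1 x + h2 x) - ES (p # ps) x\<bar> = \<bar>c * (h1 x - exp (a \<bullet> x)) + (h2 x - ES ps x)\<bar>"
      by (simp add: p algebra_simps)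
    also have "\<dots> \<le> \<bar>c\<bar> * \<bar>h1 x - exp (a \<bullet> x)\<bar> + \<bar>h2 x - ES ps x\<bar>"
      by (metis abs_mult abs_triangle_ineq)
    also have "\<bar>c\<bar> * \<bar>h1 x - exp (a \<bullet> x)\<bar> \<le> \<bar>c\<bar> * \<epsilon>1"
      using h1(2) x by (intro mult_left_mono) auto
    also have "\<bar>c\<bar> * \<epsilon>1 \<le> \<epsilon>/2"
      using Cons.prems by (simp add: \<epsilon>1_def field_simps)
    finally show ?thesis using h2(2) x by fastforce
  qed
  then show ?case using R by blast
qed

lemma approx_cont:
  assumes F: "continuous_on XX F" and \<epsilon>: "\<epsilon> > 0"
  shows "\<exists>h. Rep h \<and> (\<forall>x\<in>XX. \<bar>F x - h x\<bar> < \<epsilon>)"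
proof -
  interpret SW: function_ring_on "{f. \<exists>ps. f = ES ps}" XX
  proof unfold_locales
    show "compact XX" by (rule compact_XX)
  next
    fix f :: "'a \<Rightarrow> real" assume "f \<in> {f. \<exists>ps. f = ES ps}" then show "continuous_on XX f" using ES_cont by blast
  next
    fix f g :: "'a \<Rightarrow> real" assume "f \<in> {f. \<exists>ps. f = ES ps}" "g \<in> {f. \<exists>ps. f = ES ps}"
    then obtain ps qs where "f = ES ps" "g = ES qs" by blast
    then show "(\<lambda>x. f x + g x) \<in> {f. \<exists>ps. f = ES ps}"
      by (intro CollectI exI[of _ "ps @ qs"]) (simp add: fun_eq_iff ES_append)
  next
    fix f g :: "'a \<Rightarrow> real" assume "f \<in> {f. \<exists>ps. f = ES ps}" "g \<in> {f. \<exists>ps. f = ES ps}"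
    then obtain ps qs where "f = ES ps" "g = ES qs" by blast
    then show "(\<lambda>x. f x * g x) \<in> {f. \<exists>ps. f = ES ps}"
      by (intro CollectI exI[of _ "concat (map (\<lambda>(c,a). map (\<lambda>(d,b). (c*d, a+b)) qs) ps)"])
         (simp add: fun_eq_iff ES_mult)
  next
    fix c :: real
    show "(\<lambda>_. c) \<in> {f. \<exists>ps. f = ES ps}"
      by (intro CollectI exI[of _ "[(c, 0)]"]) (simp add: fun_eq_iff)
  next
    fix x y :: 'a assume "x \<in> XX" "y \<in> XX" "x \<noteq> y"
    have "(x - y) \<bullet> x - (x - y) \<bullet> y = (norm (x - y))\<^sup>2"
      by (simp add: power2_norm_eq_inner inner_diff_right inner_diff_left inner_commute)
    then have "(x - y) \<bullet> x \<noteq> (x - y) \<bullet> y" using \<open>x \<noteq> y\<close> by auto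
    then have "ES [(1, x - y)] x \<noteq> ES [(1, x - y)] y" by simp
    then show "\<exists>f\<in>{f. \<exists>ps. f = ES ps}. f x \<noteq> f y" by blast
  qed
  obtain g where g: "g \<in> {f. \<exists>ps. f = ES ps}" "\<forall>x\<in>XX. \<bar>F x - g x\<bar> < \<epsilon>/2"
    using SW.Stone_Weierstrass_basic[OF F, of "\<epsilon>/2"] \<epsilon> by auto
  obtain ps where ps: "g = ES ps" using g(1) by blast
  obtain h where h: "Rep h" "\<forall>x\<in>XX. \<bar>h x - ES ps x\<bar> < \<epsilon>/2" using ES_approx[of "\<epsilon>/2" ps] \<epsilon> by auto
  have "\<bar>F x - h x\<bar> < \<epsilon>" if "x \<in> XX" for x
  proof -
    have "\<bar>F x - g x\<bar> < \<epsilon>/2" "\<bar>h x - g x\<bar> < \<epsilon>/2" using g(2) h(2) that ps by auto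
    then show ?thesis by linarith
  qed
  then show ?thesis using h(1) by blast
qed

end


lemma sum_ext_delta:
  fixes F e :: "'x \<Rightarrow> real" and k :: real
  assumes "finite Y"
  shows "(\<Sum>y\<in>insert x0 Y. ((if y \<in> Y then e y else 0) + (if y = x0 then k else 0)) * F y)
         = (\<Sum>y\<in>Y. e y * F y) + k * F x0"
proof -
  have "(\<Sum>y\<in>insert x0 Y. ((if y \<in> Y then e y else 0) + (if y = x0 then k else 0)) * F y)
      = (\<Sum>y\<in>insert x0 Y. (if y \<in> Y then e y * F y else 0) + (if y = x0 then k * F x0 else 0))"
    by (rule sum.cong; cases "y = x0"; cases "y \<in> Y") (simp_all add: distrib_right)
  also have "\<dots> = (\<Sum>y\<in>insert x0 Y. (if y \<in> Y then e y * F y else 0)) + (\<Sum>y\<in>insert x0 Y. (if y = x0 then k * F x0 else 0))"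
    by (rule sum.distrib)
  also have "(\<Sum>y\<in>insert x0 Y. (if y \<in> Y then e y * F y else 0)) = (\<Sum>y\<in>Y. e y * F y)"
    using assms by (simp add: sum.inter_restrict[symmetric] Int_absorb1 subset_insertI)
  also have "(\<Sum>y\<in>insert x0 Y. (if y = x0 then k * F x0 else 0)) = k * F x0"
    using assms by (simp add: sum.delta)
  finally show ?thesis .
qed

lemma span_exists:
  fixes V :: "'x \<Rightarrow> nat \<Rightarrow> real"
  shows "\<exists>Y. finite Y \<and> Y \<subseteq> A \<and> (\<forall>x\<in>A. \<exists>e. \<forall>j<n. V x j = (\<Sum>y\<in>Y. e y * V y j))"
proof (induction n arbitrary: V)
  case 0 then show ?case by (intro exI[of _ "{}"]) auto
next
  case (Suc n)
  show ?case
  proof (cases "\<forall>x\<in>A. V x n = 0")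
    case True
    obtain Y where Y: "finite Y" "Y \<subseteq> A" "\<forall>x\<in>A. \<exists>e. \<forall>j<n. V x j = (\<Sum>y\<in>Y. e y * V y j)"
      using Suc.IH[of V] by blast
    have "\<forall>x\<in>A. \<exists>e. \<forall>j<Suc n. V x j = (\<Sum>y\<in>Y. e y * V y j)"
    proof
      fix x assume x: "x \<in> A"
      obtain e where e: "\<forall>j<n. V x j = (\<Sum>y\<in>Y. e y * V y j)" using Y(3) x by blast
      have "V x j = (\<Sum>y\<in>Y. e y * V y j)" if "j < Suc n" for j
      proof (cases "j < n")
        case True then show ?thesis using e by blast
      next
        case False
        then have jn: "j = n" using that by simp
        have "(\<Sum>y\<in>Y. e y * V y j) = 0" using Y(2) True jn by (intro sum.neutral) auto
        then show ?thesis using True x jn by simp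
      qed
      then show "\<exists>e. \<forall>j<Suc n. V x j = (\<Sum>y\<in>Y. e y * V y j)" by blast
    qed
    then show ?thesis using Y by blast
  next
    case False
    then obtain x0 where x0: "x0 \<in> A" "V x0 n \<noteq> 0" by blast
    define lam where "lam x = V x n / V x0 n" for x
    define W where "W x j = V x j - lam x * V x0 j" for x j
    define v0 where "v0 = V x0 n"
    have Vn: "V x n = lam x * v0" for x using x0 by (simp add: lam_def v0_def)
    obtain Y where Y: "finite Y" "Y \<subseteq> A" "\<forall>x\<in>A. \<exists>e. \<forall>j<n. W x j = (\<Sum>y\<in>Y. e y * W y j)"
      using Suc.IH[of W] by blast
    have "\<forall>x\<in>A. \<exists>e. \<forall>j<Suc n. V x j = (\<Sum>y\<in>insert x0 Y. e y * V y j)"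
    proof
      fix x assume x: "x \<in> A"
      obtain e where e: "\<forall>j<n. W x j = (\<Sum>y\<in>Y. e y * W y j)" using Y(3) x by blast
      define k where "k = lam x - (\<Sum>y\<in>Y. e y * lam y)"
      define e' where "e' y = (if y \<in> Y then e y else 0) + (if y = x0 then k else 0)" for y
      have E: "(\<Sum>y\<in>insert x0 Y. e' y * V y j) = (\<Sum>y\<in>Y. e y * V y j) + k * V x0 j" for j
        unfolding e'_def by (rule sum_ext_delta[OF Y(1)])
      have "V x j = (\<Sum>y\<in>insert x0 Y. e' y * V y j)" if j: "j < Suc n" for j
      proof (cases "j < n")
        case True
        have "V x j = W x j + lam x * V x0 j" by (simp add: W_def)
        also have "W x j = (\<Sum>y\<in>Y. e y * W y j)" using e True by blast
        also have "\<dots> = (\<Sum>y\<in>Y. e y * V y j - (e y * lam y) * V x0 j)"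
          by (simp add: W_def algebra_simps)
        also have "\<dots> = (\<Sum>y\<in>Y. e y * V y j) - (\<Sum>y\<in>Y. e y * lam y) * V x0 j"
          by (simp add: sum_subtractf sum_distrib_right)
        finally show ?thesis unfolding E k_def by (simp add: algebra_simps)
      next
        case False
        then have jn: "j = n" using j by simp
        have "(\<Sum>y\<in>Y. e y * V y n) = (\<Sum>y\<in>Y. e y * lam y) * v0"
          by (simp add: Vn sum_distrib_right mult.assoc)
        moreover have "V x0 n = v0" by (simp add: v0_def)
        moreover have "lam x0 = 1" using x0 by (simp add: lam_def)
        ultimately show ?thesis unfolding E k_def jn by (simp add: Vn algebra_simps)
      qed
      then show "\<exists>e. \<forall>j<Suc n. V x j = (\<Sum>y\<in>insert x0 Y. e y * V y j)" by blast
    qed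
    then show ?thesis using Y x0 by (intro exI[of _ "insert x0 Y"]) auto
  qed
qed


definition ipn :: "nat \<Rightarrow> (nat \<Rightarrow> real) \<Rightarrow> (nat \<Rightarrow> real) \<Rightarrow> real" where
  "ipn n u w = (\<Sum>j<n. u j * w j)"

lemma ipn_lin:
  assumes "\<forall>y\<in>Y. ipn n w (V y) = 0"
  shows "ipn n w (\<lambda>j. \<Sum>y\<in>Y. c y * V y j) = 0"
proof -
  have "ipn n w (\<lambda>j. \<Sum>y\<in>Y. c y * V y j) = (\<Sum>y\<in>Y. c y * ipn n w (V y))"
  proof -
    have "ipn n w (\<lambda>j. \<Sum>y\<in>Y. c y * V y j) = (\<Sum>j<n. \<Sum>y\<in>Y. w j * (c y * V y j))"
      unfolding ipn_def by (simp add: sum_distrib_left)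
    also have "\<dots> = (\<Sum>y\<in>Y. \<Sum>j<n. w j * (c y * V y j))" by (rule sum.swap)
    also have "\<dots> = (\<Sum>y\<in>Y. c y * ipn n w (V y))"
      unfolding ipn_def by (simp add: sum_distrib_left mult.left_commute)
    finally show ?thesis .
  qed
  also have "\<dots> = 0" using assms by simp
  finally show ?thesis .
qed

lemma proj_exists:
  fixes V :: "'x \<Rightarrow> nat \<Rightarrow> real"
  assumes "finite Y"
  shows "\<exists>c. \<forall>y'\<in>Y. ipn n (\<lambda>j. d j - (\<Sum>y\<in>Y. c y * V y j)) (V y') = 0"
  using assms
proof (induction Y arbitrary: d rule: finite_induct)
  case empty then show ?case by simp
next
  case (insert b Y)
  obtain c where c: "\<forall>y'\<in>Y. ipn n (\<lambda>j. d j - (\<Sum>y\<in>Y. c y * V y j)) (V y') = 0"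
    using insert.IH by blast
  obtain c2 where c2: "\<forall>y'\<in>Y. ipn n (\<lambda>j. V b j - (\<Sum>y\<in>Y. c2 y * V y j)) (V y') = 0"
    using insert.IH by blast
  define r where "r = (\<lambda>j. d j - (\<Sum>y\<in>Y. c y * V y j))"
  define p where "p = (\<lambda>j. (\<Sum>y\<in>Y. c2 y * V y j))"
  define b' where "b' = (\<lambda>j. V b j - p j)"
  define \<beta> where "\<beta> = ipn n b' b'"
  have rY: "\<forall>y'\<in>Y. ipn n r (V y') = 0" using c by (simp add: r_def)
  have bY: "\<forall>y'\<in>Y. ipn n b' (V y') = 0" using c2 by (simp add: b'_def p_def)
  have sumins: "(\<Sum>y\<in>insert b Y. c' y * V y j) = c' b * V b j + (\<Sum>y\<in>Y. c' y * V y j)" for c' j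
    using insert.hyps by simp
  show ?case
  proof (cases "\<beta> = 0")
    case True
    have b0: "b' j = 0" if "j < n" for j
    proof -
      have "(\<Sum>j<n. b' j * b' j) = 0" using True by (simp add: \<beta>_def ipn_def)
      then have "\<forall>j\<in>{..<n}. b' j * b' j = 0" by (subst (asm) sum_nonneg_eq_0_iff) auto
      then show ?thesis using that by simp
    qed
    define c' where "c' y = (if y = b then 0 else c y)" for y
    have sc': "(\<Sum>y\<in>Y. c' y * V y j) = (\<Sum>y\<in>Y. c y * V y j)" for j
      using insert.hyps by (intro sum.cong) (auto simp: c'_def)
    have rb: "ipn n r (V b) = 0"
    proof -
      have "ipn n r (V b) = ipn n r b' + ipn n r p"
        by (simp add: ipn_def b'_def right_diff_distrib sum_subtractf)
      also have "ipn n r b' = 0" using b0 by (simp add: ipn_def)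
      also have "ipn n r p = 0" unfolding p_def by (rule ipn_lin[OF rY])
      finally show ?thesis by simp
    qed
    have "\<forall>y'\<in>insert b Y. ipn n (\<lambda>j. d j - (\<Sum>y\<in>insert b Y. c' y * V y j)) (V y') = 0"
    proof -
      have eq: "(\<lambda>j. d j - (\<Sum>y\<in>insert b Y. c' y * V y j)) = r"
        unfolding fun_eq_iff sumins sc' by (simp add: r_def c'_def)
      show ?thesis unfolding eq using rY rb by auto
    qed
    then show ?thesis by blast
  next
    case False
    define \<kappa> where "\<kappa> = ipn n r b' / \<beta>"
    define c' where "c' y = (if y = b then \<kappa> else c y - \<kappa> * c2 y)" for y
    have sc': "(\<Sum>y\<in>Y. c' y * V y j) = (\<Sum>y\<in>Y. c y * V y j) - \<kappa> * p j" for j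
    proof -
      have "(\<Sum>y\<in>Y. c' y * V y j) = (\<Sum>y\<in>Y. c y * V y j - \<kappa> * (c2 y * V y j))"
        using insert.hyps by (intro sum.cong) (auto simp: c'_def algebra_simps)
      also have "\<dots> = (\<Sum>y\<in>Y. c y * V y j) - \<kappa> * p j"
        by (simp add: p_def sum_subtractf sum_distrib_left)
      finally show ?thesis .
    qed
    have eq: "(\<lambda>j. d j - (\<Sum>y\<in>insert b Y. c' y * V y j)) = (\<lambda>j. r j - \<kappa> * b' j)"
      unfolding fun_eq_iff sumins sc' by (simp add: r_def b'_def c'_def algebra_simps)
    define r' where "r' = (\<lambda>j. r j - \<kappa> * b' j)"
    have r'Y: "\<forall>y'\<in>Y. ipn n r' (V y') = 0"
    proof
      fix y' assume "y' \<in> Y"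
      then have "ipn n r (V y') = 0" "ipn n b' (V y') = 0" using rY bY by auto
      moreover have "ipn n r' (V y') = ipn n r (V y') - \<kappa> * ipn n b' (V y')"
        by (simp add: ipn_def r'_def left_diff_distrib sum_subtractf sum_distrib_left mult.assoc)
      ultimately show "ipn n r' (V y') = 0" by simp
    qed
    have r'b': "ipn n r' b' = 0"
    proof -
      have "ipn n r' b' = ipn n r b' - \<kappa> * \<beta>"
        by (simp add: ipn_def r'_def \<beta>_def left_diff_distrib sum_subtractf sum_distrib_left mult.assoc)
      then show ?thesis using False by (simp add: \<kappa>_def)
    qed
    have r'b: "ipn n r' (V b) = 0"
    proof -
      have "ipn n r' (V b) = ipn n r' b' + ipn n r' p"
        by (simp add: ipn_def b'_def right_diff_distrib sum_subtractf)
      also have "ipn n r' p = 0" unfolding p_def by (rule ipn_lin[OF r'Y])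
      finally show ?thesis using r'b' by simp
    qed
    have "\<forall>y'\<in>insert b Y. ipn n (\<lambda>j. d j - (\<Sum>y\<in>insert b Y. c' y * V y j)) (V y') = 0"
      unfolding eq using r'Y r'b by (auto simp: r'_def)
    then show ?thesis by blast
  qed
qed


lemma LA:
  fixes V :: "'x \<Rightarrow> nat \<Rightarrow> real"
  shows "\<exists>Y. finite Y \<and> Y \<subseteq> A \<and> (\<forall>y\<in>Y. \<exists>j<n. V y j \<noteq> 0) \<and>
     ((\<exists>x\<in>A. \<exists>j<n. V x j \<noteq> 0) \<longrightarrow> Y \<noteq> {}) \<and>
     (\<forall>d. \<exists>c. \<forall>x\<in>A. (\<Sum>j<n. d j * V x j) = (\<Sum>y\<in>Y. c y * (\<Sum>j<n. V y j * V x j)))"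
proof -
  obtain Y0 where Y0: "finite Y0" "Y0 \<subseteq> A" "\<forall>x\<in>A. \<exists>e. \<forall>j<n. V x j = (\<Sum>y\<in>Y0. e y * V y j)"
    using span_exists[of A n V] by blast
  define Y where "Y = {y\<in>Y0. \<exists>j<n. V y j \<noteq> 0}"
  have fY: "finite Y" using Y0(1) by (simp add: Y_def)
  have spY: "\<forall>x\<in>A. \<exists>e. \<forall>j<n. V x j = (\<Sum>y\<in>Y. e y * V y j)"
  proof
    fix x assume "x \<in> A"
    then obtain e where e: "\<forall>j<n. V x j = (\<Sum>y\<in>Y0. e y * V y j)" using Y0(3) by blast
    have "(\<Sum>y\<in>Y0. e y * V y j) = (\<Sum>y\<in>Y. e y * V y j)" if "j < n" for j
      using Y0(1) that by (intro sum.mono_neutral_right) (auto simp: Y_def)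
    then show "\<exists>e. \<forall>j<n. V x j = (\<Sum>y\<in>Y. e y * V y j)" using e by metis
  qed
  have ne: "Y \<noteq> {}" if "\<exists>x\<in>A. \<exists>j<n. V x j \<noteq> 0"
  proof
    assume "Y = {}"
    then show False using that spY by fastforce
  qed
  have main: "\<exists>c. \<forall>x\<in>A. (\<Sum>j<n. d j * V x j) = (\<Sum>y\<in>Y. c y * (\<Sum>j<n. V y j * V x j))" for d
  proof -
    obtain c where c: "\<forall>y'\<in>Y. ipn n (\<lambda>j. d j - (\<Sum>y\<in>Y. c y * V y j)) (V y') = 0"
      using proj_exists[OF fY] by blast
    have "(\<Sum>j<n. d j * V x j) = (\<Sum>y\<in>Y. c y * (\<Sum>j<n. V y j * V x j))" if x: "x \<in> A" for x
    proof -
      obtain e where e: "\<forall>j<n. V x j = (\<Sum>y\<in>Y. e y * V y j)" using spY x by blast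
      define r where "r = (\<lambda>j. d j - (\<Sum>y\<in>Y. c y * V y j))"
      have "ipn n r (V x) = ipn n r (\<lambda>j. \<Sum>y\<in>Y. e y * V y j)"
        unfolding ipn_def using e by (intro sum.cong) auto
      also have "\<dots> = 0" by (rule ipn_lin) (use c in \<open>simp add: r_def\<close>)
      finally have r0: "ipn n r (V x) = 0" .
      have "(\<Sum>j<n. d j * V x j) = (\<Sum>j<n. r j * V x j + (\<Sum>y\<in>Y. c y * V y j) * V x j)"
        by (intro sum.cong refl) (simp add: r_def left_diff_distrib)
      also have "\<dots> = ipn n r (V x) + (\<Sum>j<n. (\<Sum>y\<in>Y. c y * V y j) * V x j)"
        by (simp add: ipn_def sum.distrib)
      also have "(\<Sum>j<n. (\<Sum>y\<in>Y. c y * V y j) * V x j) = (\<Sum>j<n. \<Sum>y\<in>Y. c y * (V y j * V x j))"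
        by (simp add: sum_distrib_right mult.assoc)
      also have "\<dots> = (\<Sum>y\<in>Y. \<Sum>j<n. c y * (V y j * V x j))"
        by (rule sum.swap)
      also have "\<dots> = (\<Sum>y\<in>Y. c y * (\<Sum>j<n. V y j * V x j))"
        by (simp add: sum_distrib_left)
      finally show ?thesis using r0 by simp
    qed
    then show ?thesis by blast
  qed
  show ?thesis
    using fY Y0(2) ne main by (intro exI[of _ Y]) (auto simp: Y_def)
qed


lemma hid_nonneg: "hid N W1 W b l x j \<ge> 0"
  by (cases "(N, W1, W, b, l, x, j)" rule: hid.cases) auto

lemma hid_cong:
  assumes "\<forall>i\<le>l. W' i = W i" "\<forall>i\<le>l. b' i = b i" "\<forall>i<l. N' i = N i"
  shows "hid N' W1 W' b' l x j = hid N W1 W b l x j"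
  using assms
proof (induction l arbitrary: j rule: less_induct)
  case (less l)
  show ?case
  proof (cases l)
    case 0 then show ?thesis by simp
  next
    case (Suc l1)
    show ?thesis
    proof (cases l1)
      case 0 then show ?thesis using Suc less.prems by simp
    next
      case (Suc l2)
      have IH: "hid N' W1 W' b' (Suc l2) x j' = hid N W1 W b (Suc l2) x j'" for j'
        using less.IH[of "Suc l2" j'] less.prems \<open>l = Suc l1\<close> Suc by auto
      have "N' (Suc l2) = N (Suc l2)" "W' (Suc (Suc l2)) = W (Suc (Suc l2))" "b' (Suc (Suc l2)) = b (Suc (Suc l2))"
        using less.prems \<open>l = Suc l1\<close> Suc by auto
      then show ?thesis using \<open>l = Suc l1\<close> Suc IH by simp
    qed
  qed
qed

lemma sum_set_nth:
  assumes "distinct ys"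
  shows "(\<Sum>y\<in>set ys. g y) = (\<Sum>i<length ys. g (ys ! i))"
  using assms by (simp add: sum.distinct_set_conv_list sum_list_sum_nth atLeast0LessThan)

context setting begin

definition Inv :: "('k \<Rightarrow> 'a \<Rightarrow> real) \<Rightarrow> nat \<Rightarrow> bool" where
  "Inv G L' \<longleftrightarrow> (\<exists>N W1 W b. (\<forall>l\<in>{1..L'}. N l > 0) \<and> sampled XX L' N W1 W b \<and>
     (\<forall>j<N L'. hid N W1 W b L' z j = 0) \<and> (\<exists>x\<in>XX. \<exists>j<N L'. hid N W1 W b L' x j \<noteq> 0) \<and>
     (\<forall>k. \<exists>c D. \<forall>x\<in>XX. G k x = c + (\<Sum>j<N L'. D j * hid N W1 W b L' x j)))"

lemma Inv_base:
  assumes good: "\<forall>q\<in>set Q. good q" and ne: "Q \<noteq> []"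
    and nz: "\<exists>x\<in>XX. \<exists>j<length Q. nf (Q!j) x \<noteq> 0"
    and rep: "\<And>k. RepQ Q (G k)"
  shows "Inv G 1"
proof -
  define N :: "nat \<Rightarrow> nat" where "N = (\<lambda>l. length Q)"
  define W1 where "W1 = (\<lambda>i. (1 / (norm (snd (Q!i) - fst (Q!i)))\<^sup>2) *\<^sub>R (snd (Q!i) - fst (Q!i)))"
  define b :: "nat \<Rightarrow> nat \<Rightarrow> real" where "b = (\<lambda>l i. W1 i \<bullet> fst (Q!i))"
  define W :: "nat \<Rightarrow> nat \<Rightarrow> nat \<Rightarrow> real" where "W = (\<lambda>l i j. 0)"
  have h1: "hid N W1 W b 1 x i = nf (Q!i) x" for x i
    by (simp add: nf_def W1_def b_def)
  have L1: "\<forall>i<N 1. \<exists>x1\<in>XX. \<exists>x2\<in>XX. x1 \<noteq> x2 \<and> W1 i = (1 / (norm (x2 - x1))\<^sup>2) *\<^sub>R (x2 - x1) \<and> b 1 i = W1 i \<bullet> x1"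
  proof (intro allI impI)
    fix i assume "i < N 1"
    then have "Q!i \<in> set Q" by (simp add: N_def)
    then have g: "good (Q!i)" using good by blast
    show "\<exists>x1\<in>XX. \<exists>x2\<in>XX. x1 \<noteq> x2 \<and> W1 i = (1 / (norm (x2 - x1))\<^sup>2) *\<^sub>R (x2 - x1) \<and> b 1 i = W1 i \<bullet> x1"
      using g unfolding good_def by (intro bexI[of _ "fst (Q!i)"] bexI[of _ "snd (Q!i)"]) (auto simp: W1_def b_def)
  qed
  have "sampled XX 1 N W1 W b"
    unfolding sampled_def using L1 by simp
  moreover have "\<forall>j<N 1. hid N W1 W b 1 z j = 0"
    unfolding h1 using good by (auto simp: N_def good_def)
  moreover have "\<exists>x\<in>XX. \<exists>j<N 1. hid N W1 W b 1 x j \<noteq> 0" unfolding h1 using nz by (simp add: N_def)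
  moreover have "\<forall>k. \<exists>c D. \<forall>x\<in>XX. G k x = c + (\<Sum>j<N 1. D j * hid N W1 W b 1 x j)"
    using rep unfolding RepQ_def h1 by (simp add: N_def) blast
  moreover have "\<forall>l\<in>{1..1}. N l > 0" using ne by (simp add: N_def)
  ultimately show ?thesis unfolding Inv_def by blast
qed

end


definition layer_ok :: "'a set \<Rightarrow> nat \<Rightarrow> ('a \<Rightarrow> nat \<Rightarrow> real) \<Rightarrow> nat \<Rightarrow> (nat \<Rightarrow> nat \<Rightarrow> real) \<Rightarrow> (nat \<Rightarrow> real) \<Rightarrow> bool" where
  "layer_ok X n h m Wl bl \<longleftrightarrow> (\<forall>i<m. \<exists>x1\<in>X. \<exists>x2\<in>X. (\<exists>j<n. h x1 j \<noteq> h x2 j) \<and>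
      (\<forall>j<n. Wl i j = (h x2 j - h x1 j) / (\<Sum>k<n. (h x2 k - h x1 k)\<^sup>2)) \<and> bl i = (\<Sum>j<n. Wl i j * h x1 j))"

definition layer1_ok :: "'a::euclidean_space set \<Rightarrow> nat \<Rightarrow> (nat \<Rightarrow> 'a) \<Rightarrow> (nat \<Rightarrow> real) \<Rightarrow> bool" where
  "layer1_ok X m W1 b1 \<longleftrightarrow> (\<forall>i<m. \<exists>x1\<in>X. \<exists>x2\<in>X. x1 \<noteq> x2 \<and>
         W1 i = (1 / (norm (x2 - x1))\<^sup>2) *\<^sub>R (x2 - x1) \<and> b1 i = W1 i \<bullet> x1)"

lemma sampled_iff: "sampled X L N W1 W b \<longleftrightarrow> (1 \<le> L \<longrightarrow> layer1_ok X (N 1) W1 (b 1)) \<and>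
   (\<forall>l\<in>{2..L}. layer_ok X (N (l-1)) (hid N W1 W b (l-1)) (N l) (W l) (b l))"
  unfolding sampled_def layer_ok_def layer1_ok_def by simp

context setting begin

lemma Inv_step:
  assumes inv: "Inv G L'" and L1: "L' \<ge> 1"
  shows "Inv G (Suc L')"
proof -
  obtain N W1 W b where I: "\<forall>l\<in>{1..L'}. N l > 0" "sampled XX L' N W1 W b"
    "\<forall>j<N L'. hid N W1 W b L' z j = 0" "\<exists>x\<in>XX. \<exists>j<N L'. hid N W1 W b L' x j \<noteq> 0"
    "\<forall>k. \<exists>c D. \<forall>x\<in>XX. G k x = c + (\<Sum>j<N L'. D j * hid N W1 W b L' x j)"
    using inv unfolding Inv_def by blast
  define n where "n = N L'"
  define V where "V = hid N W1 W b L'"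
  obtain Y where Y: "finite Y" "Y \<subseteq> XX" "\<forall>y\<in>Y. \<exists>j<n. V y j \<noteq> 0"
      "(\<exists>x\<in>XX. \<exists>j<n. V x j \<noteq> 0) \<longrightarrow> Y \<noteq> {}"
      "\<forall>d. \<exists>c. \<forall>x\<in>XX. (\<Sum>j<n. d j * V x j) = (\<Sum>y\<in>Y. c y * (\<Sum>j<n. V y j * V x j))"
    using LA[where V=V and A=XX and n=n] by blast
  have Vz: "V z j = 0" if "j < n" for j using I(3) that by (simp add: V_def n_def)
  have Yne: "Y \<noteq> {}" using Y(4) I(4) by (simp add: n_def V_def)
  obtain ys where ys: "set ys = Y" "distinct ys" using finite_distinct_list[OF Y(1)] by blast
  define m where "m = length ys"
  have m: "m > 0" using Yne ys by (auto simp: m_def)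
  have ysY: "ys!i \<in> Y" if "i < m" for i using that ys by (auto simp: m_def)
  define s where "s i = (\<Sum>k<n. (V (ys!i) k)\<^sup>2)" for i
  have s: "s i > 0" if i: "i < m" for i
  proof -
    obtain j where j: "j < n" "V (ys!i) j \<noteq> 0" using Y(3) ysY[OF i] by blast
    then have "(V (ys!i) j)\<^sup>2 > 0" by simp
    moreover have "(V (ys!i) j)\<^sup>2 \<le> s i" unfolding s_def by (rule member_le_sum) (use j in auto)
    ultimately show ?thesis by linarith
  qed
  define N' where "N' = N(Suc L' := m)"
  define W' where "W' = W(Suc L' := (\<lambda>i j. V (ys!i) j / s i))"
  define b' where "b' = b(Suc L' := (\<lambda>i. 0))"
  have same: "hid N' W1 W' b' l = hid N W1 W b l" if "l \<le> L'" for l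
    using that by (intro ext hid_cong) (auto simp: N'_def W'_def b'_def)
  obtain l0 where l0: "L' = Suc l0" using L1 by (cases L') auto
  have new: "hid N' W1 W' b' (Suc L') x i = (\<Sum>j<n. V (ys!i) j * V x j) / s i" if i: "i < m" for x i
  proof -
    have "hid N' W1 W' b' (Suc L') x i = max ((\<Sum>j<N' L'. W' (Suc L') i j * hid N' W1 W' b' L' x j) - b' (Suc L') i) 0"
      by (simp add: l0)
    also have "\<dots> = max (\<Sum>j<n. V (ys!i) j / s i * V x j) 0"
      using same[of L'] by (simp add: N'_def W'_def b'_def n_def V_def)
    also have "(\<Sum>j<n. V (ys!i) j / s i * V x j) = (\<Sum>j<n. V (ys!i) j * V x j) / s i"
      by (simp add: sum_divide_distrib)
    also have "(\<Sum>j<n. V (ys!i) j * V x j) / s i \<ge> 0"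
      using s[OF i] by (intro divide_nonneg_pos sum_nonneg mult_nonneg_nonneg) (auto simp: V_def hid_nonneg)
    then have "max ((\<Sum>j<n. V (ys!i) j * V x j) / s i) 0 = (\<Sum>j<n. V (ys!i) j * V x j) / s i" by simp
    finally show ?thesis .
  qed
  have N'L: "N' (Suc L') = m" by (simp add: N'_def)
  have samp_old: "(1 \<le> L' \<longrightarrow> layer1_ok XX (N 1) W1 (b 1)) \<and>
      (\<forall>l\<in>{2..L'}. layer_ok XX (N (l-1)) (hid N W1 W b (l-1)) (N l) (W l) (b l))"
    using I(2) by (simp add: sampled_iff)
  have newlayer: "layer_ok XX (N' (Suc L' - 1)) (hid N' W1 W' b' (Suc L' - 1)) (N' (Suc L')) (W' (Suc L')) (b' (Suc L'))"
    unfolding layer_ok_def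
  proof (intro allI impI)
    fix i assume i: "i < N' (Suc L')"
    then have i: "i < m" by (simp add: N'L)
    have e1: "N' (Suc L' - 1) = n" "hid N' W1 W' b' (Suc L' - 1) = V"
      using same[of L'] by (auto simp: N'_def n_def V_def)
    obtain j where j: "j < n" "V (ys!i) j \<noteq> 0" using Y(3) ysY[OF i] by blast
    have sq: "(\<Sum>k<n. (V (ys!i) k - V z k)\<^sup>2) = s i"
      unfolding s_def by (intro sum.cong) (auto simp: Vz)
    show "\<exists>x1\<in>XX. \<exists>x2\<in>XX.
          (\<exists>j<N' (Suc L' - 1). hid N' W1 W' b' (Suc L' - 1) x1 j \<noteq> hid N' W1 W' b' (Suc L' - 1) x2 j) \<and>
          (\<forall>j<N' (Suc L' - 1). W' (Suc L') i j = (hid N' W1 W' b' (Suc L' - 1) x2 j - hid N' W1 W' b' (Suc L' - 1) x1 j) /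
             (\<Sum>k<N' (Suc L' - 1). (hid N' W1 W' b' (Suc L' - 1) x2 k - hid N' W1 W' b' (Suc L' - 1) x1 k)\<^sup>2)) \<and>
          b' (Suc L') i = (\<Sum>j<N' (Suc L' - 1). W' (Suc L') i j * hid N' W1 W' b' (Suc L' - 1) x1 j)"
      unfolding e1
    proof (rule bexI[of _ z], rule bexI[of _ "ys!i"], intro conjI)
      show "\<exists>j<n. V z j \<noteq> V (ys ! i) j" using j Vz by auto
      show "\<forall>j<n. W' (Suc L') i j = (V (ys ! i) j - V z j) / (\<Sum>k<n. (V (ys ! i) k - V z k)\<^sup>2)"
        unfolding sq by (simp add: W'_def Vz)
      show "b' (Suc L') i = (\<Sum>j<n. W' (Suc L') i j * V z j)" by (simp add: b'_def Vz)
      show "ys ! i \<in> XX" using ysY[OF i] Y(2) by blast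
      show "z \<in> XX" by (rule z_XX)
    qed
  qed
  have "sampled XX (Suc L') N' W1 W' b'"
    unfolding sampled_iff
  proof (intro conjI impI ballI)
    show "layer1_ok XX (N' 1) W1 (b' 1)"
      using samp_old L1 l0 by (simp add: N'_def b'_def)
  next
    fix l assume l: "l \<in> {2..Suc L'}"
    show "layer_ok XX (N' (l - 1)) (hid N' W1 W' b' (l - 1)) (N' l) (W' l) (b' l)"
    proof (cases "l = Suc L'")
      case True then show ?thesis using newlayer by simp
    next
      case False
      then have lL: "l \<le> L'" "l \<in> {2..L'}" using l by auto
      have "N' (l-1) = N (l-1)" "N' l = N l" "W' l = W l" "b' l = b l" "hid N' W1 W' b' (l - 1) = hid N W1 W b (l-1)"
        using lL same[of "l-1"] by (auto simp: N'_def W'_def b'_def)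
      then show ?thesis using samp_old lL by simp
    qed
  qed
  moreover have "\<forall>l\<in>{1..Suc L'}. N' l > 0"
    using I(1) m by (auto simp: N'_def)
  moreover have "\<forall>j<N' (Suc L'). hid N' W1 W' b' (Suc L') z j = 0"
    using Vz by (simp add: N'L new)
  moreover have "\<exists>x\<in>XX. \<exists>j<N' (Suc L'). hid N' W1 W' b' (Suc L') x j \<noteq> 0"
  proof -
    have "hid N' W1 W' b' (Suc L') (ys!0) 0 = s 0 / s 0"
      using m by (simp add: new s_def power2_eq_square)
    also have "\<dots> = 1" using s[OF m] by simp
    finally show ?thesis using m ysY[OF m] Y(2) N'L by (intro bexI[of _ "ys!0"] exI[of _ 0]) auto
  qed
  moreover have "\<forall>k. \<exists>c D. \<forall>x\<in>XX. G k x = c + (\<Sum>j<N' (Suc L'). D j * hid N' W1 W' b' (Suc L') x j)"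
  proof
    fix k
    obtain c D where cD: "\<forall>x\<in>XX. G k x = c + (\<Sum>j<n. D j * V x j)" using spec[OF I(5), of k] unfolding n_def V_def by blast
    obtain cc where cc: "\<forall>x\<in>XX. (\<Sum>j<n. D j * V x j) = (\<Sum>y\<in>Y. cc y * (\<Sum>j<n. V y j * V x j))"
      using Y(5) by blast
    define D' where "D' i = cc (ys!i) * s i" for i
    have "G k x = c + (\<Sum>i<N' (Suc L'). D' i * hid N' W1 W' b' (Suc L') x i)" if x: "x \<in> XX" for x
    proof -
      have "(\<Sum>i<N' (Suc L'). D' i * hid N' W1 W' b' (Suc L') x i) = (\<Sum>i<m. cc (ys!i) * (\<Sum>j<n. V (ys!i) j * V x j))"
        unfolding N'L
      proof (intro sum.cong refl)
        fix i assume "i \<in> {..<m}"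
        then have "i < m" by simp
        then show "D' i * hid N' W1 W' b' (Suc L') x i = cc (ys!i) * (\<Sum>j<n. V (ys!i) j * V x j)"
          using s[of i] by (simp add: new D'_def)
      qed
      also have "\<dots> = (\<Sum>y\<in>Y. cc y * (\<Sum>j<n. V y j * V x j))"
        using sum_set_nth[OF ys(2), of "\<lambda>y. cc y * (\<Sum>j<n. V y j * V x j)"] ys(1) by (simp add: m_def)
      finally show ?thesis using cD cc x by simp
    qed
    then show "\<exists>c D. \<forall>x\<in>XX. G k x = c + (\<Sum>j<N' (Suc L'). D j * hid N' W1 W' b' (Suc L') x j)" by blast
  qed
  ultimately show ?thesis unfolding Inv_def by blast
qed

end


context setting begin

lemma RepQ_concat:
  assumes "k \<in> set ks" "RepQ (Qf k) g"
  shows "RepQ (concat (map Qf ks)) g"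
  using assms
proof (induction ks)
  case Nil then show ?case by simp
next
  case (Cons k' ks)
  show ?case
  proof (cases "k = k'")
    case True then show ?thesis using Cons.prems RepQ_append1 by simp
  next
    case False then have "k \<in> set ks" using Cons.prems by simp
    then show ?thesis using Cons.IH Cons.prems RepQ_append2 by simp
  qed
qed

end

theorem theorem1:
  fixes X' :: "'a::euclidean_space set" and epsI :: real and L :: nat
    and f :: "'a \<Rightarrow> real ^ 'm::finite" and \<epsilon> :: real
  assumes "compact X'" and "X' \<noteq> {}" and "reach X' > 0"
    and "0 < epsI" and "ereal epsI < reach X'" and "epsI < 1"
    and "L > 0"
    and "continuous_on {x. infdist x X' \<le> epsI} f"
    and "\<epsilon> > 0"
  shows "\<exists>N W1 W b Wout bout. (\<forall>l\<in>{1..L}. N l > 0) \<and>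
           sampled {x. infdist x X' \<le> epsI} L N W1 W b \<and>
           (\<forall>x\<in>{x. infdist x X' \<le> epsI}.
              norm (f x - net_out L N W1 W b Wout bout x) < \<epsilon>)"
proof -
  obtain z where z: "z \<in> X'" using assms(2) by blast
  interpret S: setting X' epsI z using assms(1) z assms(4) by unfold_locales
  have XXeq: "S.XX = {x. infdist x X' \<le> epsI}" by (simp add: S.XX_def)
  define \<epsilon>' where "\<epsilon>' = \<epsilon> / real CARD('m)"
  have \<epsilon>': "\<epsilon>' > 0" using assms(9) by (simp add: \<epsilon>'_def)
  have "\<forall>k. \<exists>h. S.Rep h \<and> (\<forall>x\<in>S.XX. \<bar>f x $ k - h x\<bar> < \<epsilon>')"
  proof
    fix k :: 'm
    have "continuous_on S.XX (\<lambda>x. f x $ k)" using assms(8) unfolding XXeq by (rule continuous_on_component)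
    then show "\<exists>h. S.Rep h \<and> (\<forall>x\<in>S.XX. \<bar>f x $ k - h x\<bar> < \<epsilon>')" by (rule S.approx_cont[OF _ \<epsilon>'])
  qed
  then obtain h where h: "\<And>k. S.Rep (h k)" "\<And>k x. x \<in> S.XX \<Longrightarrow> \<bar>f x $ k - h k x\<bar> < \<epsilon>'" by metis
  have "\<forall>k. \<exists>Q. (\<forall>q\<in>set Q. S.good q) \<and> S.RepQ Q (h k)" using h(1) by (simp add: S.Rep_def)
  then obtain Qf where Qf: "\<And>k. \<forall>q\<in>set (Qf k). S.good q" "\<And>k. S.RepQ (Qf k) (h k)" by metis
  obtain ks :: "'m list" where ks: "set ks = UNIV" using finite_list[of "UNIV :: 'm set"] by auto
  obtain a :: 'a where a: "a \<in> Basis" using nonempty_Basis by blast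
  have a0: "a \<noteq> 0" using a by auto
  obtain t where t: "t > 0" "z + t *\<^sub>R a \<in> S.XX" "z - t *\<^sub>R a \<in> S.XX"
    using S.dir_pts[OF z _ a0, of z] assms(4) by auto
  define q0 where "q0 = (z, z + t *\<^sub>R a)"
  have na: "norm a > 0" using a0 by simp
  have gq0: "S.good q0" unfolding S.good_def q0_def using t a0 S.z_XX by (simp add: nf_dir)
  have nq0: "nf q0 (z + t *\<^sub>R a) = 1"
    unfolding q0_def using t a0 na by (simp add: nf_dir power2_norm_eq_inner[symmetric] power2_eq_square)
  define Q where "Q = concat (map Qf ks) @ [q0]"
  have gQ: "\<forall>q\<in>set Q. S.good q" using Qf(1) gq0 by (auto simp: Q_def)
  have repQ: "S.RepQ Q (h k)" for k
    unfolding Q_def by (rule S.RepQ_append1, rule S.RepQ_concat[of k]) (auto simp: ks Qf(2))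
  have nzQ: "\<exists>x\<in>S.XX. \<exists>j<length Q. nf (Q!j) x \<noteq> 0"
    using t nq0 by (intro bexI[of _ "z + t *\<^sub>R a"] exI[of _ "length (concat (map Qf ks))"]) (auto simp: Q_def)
  have inv1: "S.Inv h 1" by (rule S.Inv_base[OF gQ _ nzQ repQ]) (simp add: Q_def)
  have "S.Inv h L"
    using Nat.dec_induct[of 1 L "S.Inv h"] assms(7) inv1 S.Inv_step by auto
  then obtain N W1 W b where I: "\<forall>l\<in>{1..L}. N l > 0" "sampled S.XX L N W1 W b"
    "\<forall>k. \<exists>c D. \<forall>x\<in>S.XX. h k x = c + (\<Sum>j<N L. D j * hid N W1 W b L x j)"
    unfolding S.Inv_def by blast
  obtain c D where cD: "\<And>k x. x \<in> S.XX \<Longrightarrow> h k x = c k + (\<Sum>j<N L. D k j * hid N W1 W b L x j)"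
    using I(3) by metis
  define bout :: "real ^ 'm" where "bout = - (\<chi> k. c k)"
  have "norm (f x - net_out L N W1 W b D bout x) < \<epsilon>" if x: "x \<in> S.XX" for x
  proof -
    have eq: "f x - net_out L N W1 W b D bout x = (\<chi> k. f x $ k - h k x)"
      using cD[OF x] by (simp add: vec_eq_iff net_out_def bout_def algebra_simps)
    have "norm (f x - net_out L N W1 W b D bout x) \<le> (\<Sum>k\<in>UNIV. \<bar>f x $ k - h k x\<bar>)"
      unfolding eq using norm_le_l1_cart[of "\<chi> k. f x $ k - h k x"] by simp
    also have "\<dots> < (\<Sum>k\<in>(UNIV::'m set). \<epsilon>')"
      using h(2)[OF x] by (intro sum_strict_mono) auto
    also have "\<dots> = \<epsilon>" by (simp add: \<epsilon>'_def)
    finally show ?thesis .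
  qed
  then show ?thesis using I(1,2) unfolding XXeq by blast
qed


end
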